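(* Let $\mu$ be a locally finite Borel measure on $\mathbb{R}$. Then $\mu$ is absolutely decaying if and only if it is both Federer and efd.
   Context: $B(x,\rho)$ denotes the closed ball of radius $\rho$ about $x$. $\mu$ is $(C,\gamma)$-absolutely decaying ($C,\gamma>0$) if there is $\rho_0>0$ such that for all $0<\rho\le\rho_0$, $x\in\operatorname{supp}\mu$, $y\in\mathbb{R}$, $\varepsilon>0$: $\mu(B(x,\rho)\cap B(y,\varepsilon\rho))<C\varepsilon^\gamma\mu(B(x,\rho))$; $\mu$ is absolutely decaying if it is $(C,\gamma)$-absolutely decaying for some $C,\gamma>0$. $\mu$ is Federer (resp. efd) if there exist $\rho_0>0$ and $0<\varepsilon,\delta<1$ such that for every $0<\rho\le\rho_0$ and every $x\in\operatorname{supp}\mu$, the ratio $\mu(B(x,\varepsilon\rho))/\mu(B(x,\rho))$ is at least (resp. at most) $\delta$. *)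

theory Defs
  imports "HOL-Analysis.Analysis"
begin

definition locally_finite_borel :: "real measure \<Rightarrow> bool" where
  "locally_finite_borel \<mu> \<longleftrightarrow> sets \<mu> = sets borel \<and>
     (\<forall>x. \<exists>e>0. emeasure \<mu> (ball x e) < \<infinity>)"

definition msupp :: "real measure \<Rightarrow> real set" where
  "msupp \<mu> = {x. \<forall>e>0. emeasure \<mu> (ball x e) > 0}"

definition abs_decaying_with :: "real measure \<Rightarrow> real \<Rightarrow> real \<Rightarrow> bool" where
  "abs_decaying_with \<mu> C \<gamma> \<longleftrightarrow> C > 0 \<and> \<gamma> > 0 \<and>
     (\<exists>\<rho>0>0. \<forall>\<rho> x y \<epsilon>. 0 < \<rho> \<and> \<rho> \<le> \<rho>0 \<and> x \<in> msupp \<mu> \<and> \<epsilon> > 0 \<longrightarrow>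
        emeasure \<mu> (cball x \<rho> \<inter> cball y (\<epsilon> * \<rho>))
          < ennreal (C * \<epsilon> powr \<gamma>) * emeasure \<mu> (cball x \<rho>))"

definition abs_decaying :: "real measure \<Rightarrow> bool" where
  "abs_decaying \<mu> \<longleftrightarrow> (\<exists>C \<gamma>. abs_decaying_with \<mu> C \<gamma>)"

definition federer :: "real measure \<Rightarrow> bool" where
  "federer \<mu> \<longleftrightarrow> (\<exists>\<rho>0>0. \<exists>\<epsilon> \<delta>. 0 < \<epsilon> \<and> \<epsilon> < 1 \<and> 0 < \<delta> \<and> \<delta> < 1 \<and>
     (\<forall>\<rho> x. 0 < \<rho> \<and> \<rho> \<le> \<rho>0 \<and> x \<in> msupp \<mu> \<longrightarrow>
        measure \<mu> (cball x (\<epsilon> * \<rho>)) / measure \<mu> (cball x \<rho>) \<ge> \<delta>))"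

definition efd :: "real measure \<Rightarrow> bool" where
  "efd \<mu> \<longleftrightarrow> (\<exists>\<rho>0>0. \<exists>\<epsilon> \<delta>. 0 < \<epsilon> \<and> \<epsilon> < 1 \<and> 0 < \<delta> \<and> \<delta> < 1 \<and>
     (\<forall>\<rho> x. 0 < \<rho> \<and> \<rho> \<le> \<rho>0 \<and> x \<in> msupp \<mu> \<longrightarrow>
        measure \<mu> (cball x (\<epsilon> * \<rho>)) / measure \<mu> (cball x \<rho>) \<le> \<delta>))"

end

theory Submission
  imports Defs
begin

lemma lf_sets: "locally_finite_borel \<mu> \<Longrightarrow> A \<in> sets borel \<Longrightarrow> A \<in> sets \<mu>"
  unfolding locally_finite_borel_def by auto

lemma lf_cball: "locally_finite_borel \<mu> \<Longrightarrow> cball x r \<in> sets \<mu>"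
  by (rule lf_sets) auto

lemma lf_compact_fin:
  assumes lf: "locally_finite_borel \<mu>" and K: "compact K"
  shows "emeasure \<mu> K < \<infinity>"
proof -
  have "\<forall>x. \<exists>e>0. emeasure \<mu> (ball x e) < \<infinity>" using lf unfolding locally_finite_borel_def by auto
  then obtain e where e: "\<And>x. e x > 0" "\<And>x. emeasure \<mu> (ball x (e x)) < \<infinity>" by metis
  have "K \<subseteq> (\<Union>x\<in>K. ball x (e x))" using e(1) by auto
  then obtain D where D: "D \<subseteq> K" "finite D" "K \<subseteq> (\<Union>x\<in>D. ball x (e x))"
    using compactE_image[OF K, of K "\<lambda>x. ball x (e x)"] by auto
  have "emeasure \<mu> K \<le> emeasure \<mu> (\<Union>x\<in>D. ball x (e x))"
    by (rule emeasure_mono[OF D(3)]) (use lf_sets[OF lf] D(2) in auto)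
  also have "\<dots> \<le> (\<Sum>x\<in>D. emeasure \<mu> (ball x (e x)))"
    by (rule emeasure_subadditive_finite) (use lf_sets[OF lf] D(2) in auto)
  also have "\<dots> < \<infinity>" using e(2) D(2) by (simp add: sum_Pinfty less_top)
  finally show ?thesis .
qed

lemma lf_compact_zero:
  assumes lf: "locally_finite_borel \<mu>" and K: "compact K" and S: "K \<inter> msupp \<mu> = {}"
  shows "emeasure \<mu> K = 0"
proof -
  have "\<forall>x\<in>K. \<exists>e>0. emeasure \<mu> (ball x e) = 0"
  proof
    fix x assume "x \<in> K"
    then have "x \<notin> msupp \<mu>" using S by auto
    then show "\<exists>e>0. emeasure \<mu> (ball x e) = 0" unfolding msupp_def by (auto simp: not_less)
  qed
  then obtain e where e: "\<And>x. x\<in>K \<Longrightarrow> e x > 0" "\<And>x. x\<in>K \<Longrightarrow> emeasure \<mu> (ball x (e x)) = 0" by metis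
  have "K \<subseteq> (\<Union>x\<in>K. ball x (e x))" using e(1) by auto
  then obtain D where D: "D \<subseteq> K" "finite D" "K \<subseteq> (\<Union>x\<in>D. ball x (e x))"
    using compactE_image[OF K, of K "\<lambda>x. ball x (e x)"] by auto
  have "emeasure \<mu> K \<le> emeasure \<mu> (\<Union>x\<in>D. ball x (e x))"
    by (rule emeasure_mono[OF D(3)]) (use lf_sets[OF lf] D(2) in auto)
  also have "\<dots> \<le> (\<Sum>x\<in>D. emeasure \<mu> (ball x (e x)))"
    by (rule emeasure_subadditive_finite) (use lf_sets[OF lf] D(2) in auto)
  also have "\<dots> = 0" using e(2) D by (simp add: subset_iff)
  finally show ?thesis by simp
qed

lemma lf_emeasure_eq:
  assumes lf: "locally_finite_borel \<mu>" and A: "A \<subseteq> cball x r"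
  shows "emeasure \<mu> A = ennreal (measure \<mu> A)"
proof -
  have "emeasure \<mu> A \<le> emeasure \<mu> (cball x r)" using A by (rule emeasure_mono) (rule lf_cball[OF lf])
  also have "\<dots> < \<infinity>" by (rule lf_compact_fin[OF lf]) auto
  finally show ?thesis by (intro emeasure_eq_ennreal_measure) auto
qed

lemma lf_pos:
  assumes lf: "locally_finite_borel \<mu>" and x: "x \<in> msupp \<mu>" and r: "r > 0"
  shows "measure \<mu> (cball x r) > 0"
proof -
  have "0 < emeasure \<mu> (ball x r)" using x r unfolding msupp_def by auto
  also have "\<dots> \<le> emeasure \<mu> (cball x r)" by (rule emeasure_mono) (auto intro: lf_cball[OF lf])
  also have "\<dots> = ennreal (measure \<mu> (cball x r))" by (rule lf_emeasure_eq[OF lf]) auto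
  finally show ?thesis by (simp add: ennreal_less_zero_iff)
qed

lemma dec_real:
  assumes lf: "locally_finite_borel \<mu>" and d: "abs_decaying_with \<mu> C \<gamma>"
  obtains \<rho>0 where "\<rho>0 > 0" "\<And>\<rho> x y \<epsilon>. 0 < \<rho> \<Longrightarrow> \<rho> \<le> \<rho>0 \<Longrightarrow> x \<in> msupp \<mu> \<Longrightarrow> \<epsilon> > 0 \<Longrightarrow>
      measure \<mu> (cball x \<rho> \<inter> cball y (\<epsilon> * \<rho>)) < C * \<epsilon> powr \<gamma> * measure \<mu> (cball x \<rho>)"
proof -
  from d obtain \<rho>0 where C: "C > 0" and r0: "\<rho>0 > 0" and H: "\<forall>\<rho> x y \<epsilon>. 0 < \<rho> \<and> \<rho> \<le> \<rho>0 \<and> x \<in> msupp \<mu> \<and> \<epsilon> > 0 \<longrightarrow>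
        emeasure \<mu> (cball x \<rho> \<inter> cball y (\<epsilon> * \<rho>))
          < ennreal (C * \<epsilon> powr \<gamma>) * emeasure \<mu> (cball x \<rho>)"
    unfolding abs_decaying_with_def by auto
  show ?thesis
  proof (rule that[OF r0])
    fix \<rho> x y \<epsilon> :: real assume a: "0 < \<rho>" "\<rho> \<le> \<rho>0" "x \<in> msupp \<mu>" "\<epsilon> > 0"
    have "emeasure \<mu> (cball x \<rho> \<inter> cball y (\<epsilon> * \<rho>))
          < ennreal (C * \<epsilon> powr \<gamma>) * emeasure \<mu> (cball x \<rho>)" using H a by blast
    also have "\<dots> = ennreal (C * \<epsilon> powr \<gamma> * measure \<mu> (cball x \<rho>))"
      using lf_emeasure_eq[OF lf, of "cball x \<rho>" x \<rho>] C by (simp add: ennreal_mult)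
    finally show "measure \<mu> (cball x \<rho> \<inter> cball y (\<epsilon> * \<rho>)) < C * \<epsilon> powr \<gamma> * measure \<mu> (cball x \<rho>)"
      using lf_emeasure_eq[OF lf, of "cball x \<rho> \<inter> cball y (\<epsilon> * \<rho>)" x \<rho>]
      by (simp add: ennreal_less_iff)
  qed
qed

lemma forward:
  assumes lf: "locally_finite_borel \<mu>" and d: "abs_decaying_with \<mu> C \<gamma>"
  shows "federer \<mu> \<and> efd \<mu>"
proof -
  have C: "C > 0" and g: "\<gamma> > 0" using d unfolding abs_decaying_with_def by auto
  obtain \<rho>0 where r0: "\<rho>0 > 0" and H: "\<And>\<rho> x y \<epsilon>. 0 < \<rho> \<Longrightarrow> \<rho> \<le> \<rho>0 \<Longrightarrow> x \<in> msupp \<mu> \<Longrightarrow> \<epsilon> > 0 \<Longrightarrow>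
      measure \<mu> (cball x \<rho> \<inter> cball y (\<epsilon> * \<rho>)) < C * \<epsilon> powr \<gamma> * measure \<mu> (cball x \<rho>)"
    using dec_real[OF lf d] by metis
  define a where "a = (1 / (4*C)) powr (1/\<gamma>)"
  define \<epsilon> where "\<epsilon> = min (1/2) a"
  have a0: "a > 0" using C by (simp add: a_def)
  have e0: "\<epsilon> > 0" "\<epsilon> \<le> 1/2" using a0 by (auto simp: \<epsilon>_def)
  have "\<epsilon> powr \<gamma> \<le> a powr \<gamma>" using e0 g by (intro powr_mono2) (auto simp: \<epsilon>_def)
  also have "\<dots> = 1/(4*C)" using C g by (simp add: a_def powr_powr)
  finally have "C * \<epsilon> powr \<gamma> \<le> C * (1/(4*C))" using C by (intro mult_left_mono) auto
  then have Ce: "C * \<epsilon> powr \<gamma> \<le> 1/4" using C by simp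
  have fed: "measure \<mu> (cball x ((1-\<epsilon>) * \<rho>)) / measure \<mu> (cball x \<rho>) \<ge> 1/2"
    if a: "0 < \<rho>" "\<rho> \<le> \<rho>0" "x \<in> msupp \<mu>" for \<rho> x
  proof -
    have pos: "measure \<mu> (cball x \<rho>) > 0" using lf_pos[OF lf a(3) a(1)] .
    let ?B = "cball x \<rho>"
    let ?A1 = "cball x \<rho> \<inter> cball (x+\<rho>) (\<epsilon>*\<rho>)"
    let ?A2 = "cball x \<rho> \<inter> cball (x-\<rho>) (\<epsilon>*\<rho>)"
    have sub: "?B \<subseteq> cball x ((1-\<epsilon>) * \<rho>) \<union> ?A1 \<union> ?A2"
    proof
      fix t assume "t \<in> ?B"
      then show "t \<in> cball x ((1-\<epsilon>) * \<rho>) \<union> ?A1 \<union> ?A2"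
        by (auto simp: dist_real_def abs_if left_diff_distrib split: if_splits)
    qed
    have "measure \<mu> ?B \<le> measure \<mu> (cball x ((1-\<epsilon>) * \<rho>) \<union> ?A1 \<union> ?A2)"
    proof (rule measure_mono_fmeasurable[OF sub])
      show "?B \<in> sets \<mu>" by (rule lf_cball[OF lf])
      have "cball x ((1-\<epsilon>) * \<rho>) \<union> ?A1 \<union> ?A2 \<in> sets \<mu>"
        by (intro sets.Un sets.Int lf_cball[OF lf])
      moreover have "emeasure \<mu> (cball x ((1-\<epsilon>) * \<rho>) \<union> ?A1 \<union> ?A2) < \<infinity>"
      proof -
        have "(1-\<epsilon>) * \<rho> \<le> \<rho>" using e0 a by (simp add: mult_le_cancel_right1)
        then have "cball x ((1-\<epsilon>) * \<rho>) \<subseteq> ?B" by auto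
        then have "cball x ((1-\<epsilon>) * \<rho>) \<union> ?A1 \<union> ?A2 = ?B" using sub by blast
        then show ?thesis using lf_compact_fin[OF lf, of ?B] by simp
      qed
      ultimately show "cball x ((1-\<epsilon>) * \<rho>) \<union> ?A1 \<union> ?A2 \<in> fmeasurable \<mu>" by (rule fmeasurableI)
    qed
    also have "\<dots> \<le> measure \<mu> (cball x ((1-\<epsilon>) * \<rho>) \<union> ?A1) + measure \<mu> ?A2"
      by (intro measure_Un_le sets.Un sets.Int lf_cball[OF lf])
    also have "\<dots> \<le> measure \<mu> (cball x ((1-\<epsilon>) * \<rho>)) + measure \<mu> ?A1 + measure \<mu> ?A2"
      by (intro add_right_mono measure_Un_le sets.Un sets.Int lf_cball[OF lf])
    finally have 1: "measure \<mu> ?B \<le> measure \<mu> (cball x ((1-\<epsilon>) * \<rho>)) + measure \<mu> ?A1 + measure \<mu> ?A2" .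
    have 2: "measure \<mu> ?A1 < 1/4 * measure \<mu> ?B"
      using H[OF a e0(1), of "x+\<rho>"] Ce pos by (smt (verit) mult_right_mono)
    have 3: "measure \<mu> ?A2 < 1/4 * measure \<mu> ?B"
      using H[OF a e0(1), of "x-\<rho>"] Ce pos by (smt (verit) mult_right_mono)
    have "measure \<mu> (cball x ((1-\<epsilon>) * \<rho>)) \<ge> 1/2 * measure \<mu> ?B" using 1 2 3 by linarith
    then show ?thesis using pos by (simp add: le_divide_eq)
  qed
  have efd: "measure \<mu> (cball x (\<epsilon> * \<rho>)) / measure \<mu> (cball x \<rho>) \<le> 1/2"
    if a: "0 < \<rho>" "\<rho> \<le> \<rho>0" "x \<in> msupp \<mu>" for \<rho> x
  proof -
    have pos: "measure \<mu> (cball x \<rho>) > 0" using lf_pos[OF lf a(3) a(1)] .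
    have eq: "cball x \<rho> \<inter> cball x (\<epsilon> * \<rho>) = cball x (\<epsilon> * \<rho>)" proof -
      have "\<epsilon> * \<rho> \<le> \<rho>" using e0 a by (simp add: mult_le_cancel_right1)
      then show ?thesis by auto
    qed
    have "measure \<mu> (cball x (\<epsilon> * \<rho>)) < 1/4 * measure \<mu> (cball x \<rho>)"
      using H[OF a e0(1), of x] Ce pos eq by (smt (verit) mult_right_mono)
    then show ?thesis using pos by (simp add: divide_le_eq)
  qed
  show ?thesis unfolding federer_def efd_def
  proof
    show "\<exists>\<rho>0>0. \<exists>\<epsilon> \<delta>. 0 < \<epsilon> \<and> \<epsilon> < 1 \<and> 0 < \<delta> \<and> \<delta> < 1 \<and>
     (\<forall>\<rho> x. 0 < \<rho> \<and> \<rho> \<le> \<rho>0 \<and> x \<in> msupp \<mu> \<longrightarrow>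
        measure \<mu> (cball x (\<epsilon> * \<rho>)) / measure \<mu> (cball x \<rho>) \<ge> \<delta>)"
      using r0 e0 fed by (intro exI[of _ \<rho>0] conjI exI[of _ "1-\<epsilon>"] exI[of _ "1/2::real"]) auto
    show "\<exists>\<rho>0>0. \<exists>\<epsilon> \<delta>. 0 < \<epsilon> \<and> \<epsilon> < 1 \<and> 0 < \<delta> \<and> \<delta> < 1 \<and>
     (\<forall>\<rho> x. 0 < \<rho> \<and> \<rho> \<le> \<rho>0 \<and> x \<in> msupp \<mu> \<longrightarrow>
        measure \<mu> (cball x (\<epsilon> * \<rho>)) / measure \<mu> (cball x \<rho>) \<le> \<delta>)"
      using r0 e0 efd by (intro exI[of _ \<rho>0] conjI exI[of _ "\<epsilon>"] exI[of _ "1/2::real"]) auto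
  qed
qed

lemma lf_mono:
  assumes lf: "locally_finite_borel \<mu>" and A: "A \<subseteq> cball z r" "A \<in> sets \<mu>"
  shows "measure \<mu> A \<le> measure \<mu> (cball z r)"
  by (rule measure_mono_fmeasurable[OF A]) (intro fmeasurableI lf_cball[OF lf] lf_compact_fin[OF lf], auto)

lemma efd_iter:
  assumes lf: "locally_finite_borel \<mu>" and eE: "0 < \<epsilon>E" "\<epsilon>E < 1" and dE: "0 < \<delta>E"
    and H: "\<And>\<rho> x. 0 < \<rho> \<Longrightarrow> \<rho> \<le> \<rho>E \<Longrightarrow> x \<in> msupp \<mu> \<Longrightarrow>
        measure \<mu> (cball x (\<epsilon>E * \<rho>)) / measure \<mu> (cball x \<rho>) \<le> \<delta>E"
    and z: "z \<in> msupp \<mu>" and r: "0 < r" "r \<le> \<rho>E"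
  shows "measure \<mu> (cball z (\<epsilon>E^m * r)) \<le> \<delta>E^m * measure \<mu> (cball z r)"
proof (induction m)
  case 0
  then show ?case by simp
next
  case (Suc m)
  have p: "0 < \<epsilon>E^m * r" using eE r by simp
  have le: "\<epsilon>E^m * r \<le> r" using eE r by (simp add: mult_le_cancel_right1 power_le_one)
  have pos: "measure \<mu> (cball z (\<epsilon>E^m * r)) > 0" by (rule lf_pos[OF lf z p])
  have "measure \<mu> (cball z (\<epsilon>E * (\<epsilon>E^m * r))) / measure \<mu> (cball z (\<epsilon>E^m * r)) \<le> \<delta>E"
    using H[OF p _ z] le r by linarith
  then have "measure \<mu> (cball z (\<epsilon>E * (\<epsilon>E^m * r))) \<le> \<delta>E * measure \<mu> (cball z (\<epsilon>E^m * r))"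
    using pos by (simp add: divide_le_eq)
  also have "\<dots> \<le> \<delta>E * (\<delta>E^m * measure \<mu> (cball z r))"
    using Suc dE by (intro mult_left_mono) auto
  finally show ?case by (simp add: mult.assoc)
qed

lemma backward:
  assumes lf: "locally_finite_borel \<mu>" and F: "federer \<mu>" and E: "efd \<mu>"
  shows "abs_decaying \<mu>"
proof -
  obtain \<rho>F \<epsilon>F \<delta>F where rF: "\<rho>F > 0" and eF: "0 < \<epsilon>F" "\<epsilon>F < 1" and dF: "0 < \<delta>F" "\<delta>F < 1"
    and HF: "\<And>\<rho> x. 0 < \<rho> \<Longrightarrow> \<rho> \<le> \<rho>F \<Longrightarrow> x \<in> msupp \<mu> \<Longrightarrow>
        measure \<mu> (cball x (\<epsilon>F * \<rho>)) / measure \<mu> (cball x \<rho>) \<ge> \<delta>F"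
    using F unfolding federer_def by metis
  obtain \<rho>E \<epsilon>E \<delta>E where rE: "\<rho>E > 0" and eE: "0 < \<epsilon>E" "\<epsilon>E < 1" and dE: "0 < \<delta>E" "\<delta>E < 1"
    and HE: "\<And>\<rho> x. 0 < \<rho> \<Longrightarrow> \<rho> \<le> \<rho>E \<Longrightarrow> x \<in> msupp \<mu> \<Longrightarrow>
        measure \<mu> (cball x (\<epsilon>E * \<rho>)) / measure \<mu> (cball x \<rho>) \<le> \<delta>E"
    using E unfolding efd_def by metis
  define c where "c = 1/\<epsilon>F - 1"
  have c: "c > 0" using eF by (simp add: c_def)
  define \<rho>0 where "\<rho>0 = min (\<epsilon>F * \<rho>F) (\<rho>E / c)"
  have r0: "\<rho>0 > 0" using eF rF rE c by (simp add: \<rho>0_def)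
  define \<gamma> where "\<gamma> = ln \<delta>E / ln \<epsilon>E"
  have g: "\<gamma> > 0" using eE dE by (simp add: \<gamma>_def divide_neg_neg)
  have eEg: "\<epsilon>E powr \<gamma> = \<delta>E" using eE dE by (simp add: \<gamma>_def powr_def)
  have powk: "(\<epsilon>E^k) powr \<gamma> = \<delta>E^k" for k
  proof -
    have "(\<epsilon>E^k) powr \<gamma> = (\<epsilon>E powr real k) powr \<gamma>" using eE by (simp add: powr_realpow)
    also have "\<dots> = (\<epsilon>E powr \<gamma>) powr real k" by (simp add: powr_powr mult.commute)
    also have "\<dots> = \<delta>E^k" using eEg dE by (simp add: powr_realpow)
    finally show ?thesis .
  qed
  define C where "C = (2/c) powr \<gamma> / (\<delta>E * \<delta>F)"
  have C: "C > 0" using c dE dF by (simp add: C_def)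
  have main: "measure \<mu> (cball x \<rho> \<inter> cball y (\<epsilon> * \<rho>)) < C * \<epsilon> powr \<gamma> * measure \<mu> (cball x \<rho>)"
    if a: "0 < \<rho>" "\<rho> \<le> \<rho>0" "x \<in> msupp \<mu>" "\<epsilon> > 0" for \<rho> x y \<epsilon>
  proof -
    define M where "M = measure \<mu> (cball x \<rho>)"
    have M: "M > 0" unfolding M_def by (rule lf_pos[OF lf a(3) a(1)])
    define I where "I = cball x \<rho> \<inter> cball y (\<epsilon> * \<rho>)"
    have Isets: "I \<in> sets \<mu>" unfolding I_def by (intro sets.Int lf_cball[OF lf])
    have IM: "measure \<mu> I \<le> M" unfolding M_def by (rule lf_mono[OF lf _ Isets]) (auto simp: I_def)
    define t where "t = 2 * \<epsilon> / c"
    have t: "t > 0" using a c by (simp add: t_def)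
    have Ce: "C * \<epsilon> powr \<gamma> = t powr \<gamma> / (\<delta>E * \<delta>F)"
      using a c by (simp add: C_def t_def powr_mult powr_divide)
    define M' where "M' = measure \<mu> (cball x (\<rho> / \<epsilon>F))"
    have rhoF: "\<rho> / \<epsilon>F \<le> \<rho>F" using a eF unfolding \<rho>0_def by (simp add: divide_le_eq mult.commute)
    have M'pos: "M' > 0" unfolding M'_def using lf_pos[OF lf a(3)] a eF by simp
    have "measure \<mu> (cball x (\<epsilon>F * (\<rho> / \<epsilon>F))) / M' \<ge> \<delta>F"
      unfolding M'_def using HF[OF _ rhoF a(3)] a eF by simp
    then have MM': "\<delta>F * M' \<le> M" using M'pos eF unfolding M_def by (simp add: le_divide_eq)
    show ?thesis
    proof (cases "t \<ge> 1")
      case True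
      have "1 \<le> t powr \<gamma>" using True g by (intro ge_one_powr_ge_zero) auto
      have dd: "\<delta>E * \<delta>F < 1 * 1" using dE dF by (intro mult_strict_mono) auto
      have "M * (\<delta>E * \<delta>F) < M" using M dd by simp
      then have "M < M / (\<delta>E * \<delta>F)" using dE dF
        by (simp add: less_divide_eq)
      also have "\<dots> \<le> t powr \<gamma> / (\<delta>E * \<delta>F) * M"
        using \<open>1 \<le> t powr \<gamma>\<close> M dE dF by (simp add: divide_le_eq field_simps)
      finally show ?thesis using IM Ce unfolding I_def M_def by simp
    next
      case False
      show ?thesis
      proof (cases "I \<inter> msupp \<mu> = {}")
        case True
        have "emeasure \<mu> I = 0" by (rule lf_compact_zero[OF lf _ True]) (auto simp: I_def)
        then have "measure \<mu> I = 0" by (simp add: measure_def)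
        moreover have "0 < C * \<epsilon> powr \<gamma> * M" using C M a by simp
        ultimately show ?thesis unfolding I_def M_def by simp
      next
        case False': False
        then obtain z where z: "z \<in> I" "z \<in> msupp \<mu>" by auto
        obtain n where n: "\<epsilon>E^n < t" using real_arch_pow_inv[OF t eE(2)] by auto
        define k where "k = (LEAST n. \<epsilon>E^n < t)"
        have k: "\<epsilon>E^k < t" unfolding k_def by (rule LeastI[of _ n]) (rule n)
        have k0: "k \<noteq> 0" using k False by (cases k) auto
        define m where "m = k - 1"
        have km: "k = Suc m" using k0 by (simp add: m_def)
        have mt: "t \<le> \<epsilon>E^m"
        proof (rule ccontr)
          assume "\<not> t \<le> \<epsilon>E^m"
          then have "k \<le> m" unfolding k_def by (intro Least_le) auto
          then show False using km by simp
        qed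
        have cr: "c * \<rho> \<le> \<rho>E" using a c unfolding \<rho>0_def by (simp add: le_divide_eq mult.commute)
        have cr0: "0 < c * \<rho>" using a c by simp
        have "I \<subseteq> cball z (\<epsilon>E^m * (c * \<rho>))"
        proof
          fix w assume w: "w \<in> I"
          have "dist z w \<le> 2 * (\<epsilon> * \<rho>)" using z(1) w unfolding I_def
            by (auto simp: dist_real_def)
          also have "2 * (\<epsilon> * \<rho>) = t * (c * \<rho>)" using c by (simp add: t_def)
          also have "\<dots> \<le> \<epsilon>E^m * (c * \<rho>)" using mt cr0 by (intro mult_right_mono) auto
          finally show "w \<in> cball z (\<epsilon>E^m * (c * \<rho>))" by simp
        qed
        then have "measure \<mu> I \<le> measure \<mu> (cball z (\<epsilon>E^m * (c * \<rho>)))" by (rule lf_mono[OF lf _ Isets])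
        also have "\<dots> \<le> \<delta>E^m * measure \<mu> (cball z (c * \<rho>))"
          by (rule efd_iter[OF lf eE dE(1) HE z(2) cr0 cr])
        also have "measure \<mu> (cball z (c * \<rho>)) \<le> M'"
          unfolding M'_def
        proof (rule lf_mono[OF lf _ lf_cball[OF lf]])
          have "dist x z \<le> \<rho>" using z(1) by (auto simp: I_def)
          moreover have "\<rho> + c * \<rho> = \<rho> / \<epsilon>F" using eF by (simp add: c_def field_simps)
          ultimately show "cball z (c * \<rho>) \<subseteq> cball x (\<rho> / \<epsilon>F)"
            by (auto simp: dist_real_def)
        qed
        then have "\<delta>E^m * measure \<mu> (cball z (c * \<rho>)) \<le> \<delta>E^m * M'" using dE by (intro mult_left_mono) auto
        also have "\<delta>E^m * M' \<le> \<delta>E^m * (M / \<delta>F)" using MM' dF dE by (intro mult_left_mono) (auto simp: field_simps)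
        also have "\<delta>E^m * (M / \<delta>F) < t powr \<gamma> / (\<delta>E * \<delta>F) * M"
        proof -
          have "\<delta>E^k = (\<epsilon>E^k) powr \<gamma>" by (rule powk[symmetric])
          also have "\<dots> < t powr \<gamma>" using g eE k by (intro powr_less_mono2) auto
          finally have "\<delta>E * \<delta>E^m < t powr \<gamma>" using km by simp
          then have "\<delta>E^m < t powr \<gamma> / \<delta>E" using dE by (simp add: less_divide_eq mult.commute)
          from mult_strict_left_mono[OF this M] show ?thesis using M dF by (simp add: field_simps)
        qed
        finally show ?thesis using Ce unfolding I_def M_def by simp
      qed
    qed
  qed
  have "abs_decaying_with \<mu> C \<gamma>" unfolding abs_decaying_with_def
  proof (intro conjI exI[of _ \<rho>0] allI impI C g r0)
    fix \<rho> x y \<epsilon> :: real assume a: "0 < \<rho> \<and> \<rho> \<le> \<rho>0 \<and> x \<in> msupp \<mu> \<and> 0 < \<epsilon>"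
    have m: "measure \<mu> (cball x \<rho> \<inter> cball y (\<epsilon> * \<rho>)) < C * \<epsilon> powr \<gamma> * measure \<mu> (cball x \<rho>)"
      using main a by blast
    have "emeasure \<mu> (cball x \<rho> \<inter> cball y (\<epsilon> * \<rho>)) = ennreal (measure \<mu> (cball x \<rho> \<inter> cball y (\<epsilon> * \<rho>)))"
      by (rule lf_emeasure_eq[OF lf]) auto
    also have "\<dots> < ennreal (C * \<epsilon> powr \<gamma> * measure \<mu> (cball x \<rho>))"
      using m by (simp add: ennreal_less_iff)
    also have "\<dots> = ennreal (C * \<epsilon> powr \<gamma>) * emeasure \<mu> (cball x \<rho>)"
      using lf_emeasure_eq[OF lf, of "cball x \<rho>" x \<rho>] C by (simp add: ennreal_mult)
    finally show "emeasure \<mu> (cball x \<rho> \<inter> cball y (\<epsilon> * \<rho>))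
          < ennreal (C * \<epsilon> powr \<gamma>) * emeasure \<mu> (cball x \<rho>)" .
  qed
  then show ?thesis unfolding abs_decaying_def by blast
qed

theorem proposition2p4:
  fixes \<mu> :: "real measure"
  assumes "locally_finite_borel \<mu>"
  shows "abs_decaying \<mu> \<longleftrightarrow> federer \<mu> \<and> efd \<mu>"
  using forward[OF assms] backward[OF assms] unfolding abs_decaying_def by blast

end
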